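(* Let $\mathbb{F}$ be a finite field of characteristic $2$, let $h,n$ be positive integers, and let $S=\{\alpha_1,\ldots,\alpha_n\}$ be a multi-set of $n$ elements of $\mathbb{F}$. Let $A(S,h)=[a_{ij}]$ be the $h\times n$ matrix with $a_{ij}=\alpha_j^{2^{i-1}}$, and let $\mathcal{C}(S,h)\subseteq\mathbb{F}^n$ be the linear code with parity check matrix $A(S,h)$, i.e. the set of all $(x_1,\ldots,x_n)\in\mathbb{F}^n$ with $\sum_{i=1}^n\alpha_i^{2^{j-1}}x_i=0$ for $j=1,\ldots,h$. Then $\mathcal{C}(S,h)$ has minimum distance $h+1$ if and only if $S$ is $h$-wise independent over $\mathbb{F}_2$.
   Context: A multi-set $S\subseteq\mathbb{F}$ is $t$-wise independent over a subfield $\mathbb{F}'\subseteq\mathbb{F}$ if every sub-multi-set $T\subseteq S$ with $|T|\le t$ is linearly independent over $\mathbb{F}'$ (in particular a multi-set containing a repeated element or $0$ within such a $T$ is dependent). *)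

theory Defs
  imports Main "HOL-Library.Extended_Nat"
begin

text \<open>Vectors of \<open>F^n\<close> are functions \<open>nat \<Rightarrow> 'a\<close> vanishing outside \<open>{0..<n}\<close>;
  the multi-set \<open>S = {alpha_1,...,alpha_n}\<close> is an indexed family \<open>alpha :: nat \<Rightarrow> 'a\<close>
  on the index set \<open>{0..<n}\<close> (index i corresponds to the paper's i+1).\<close>

definition code_CSh :: "(nat \<Rightarrow> 'a::field) \<Rightarrow> nat \<Rightarrow> nat \<Rightarrow> (nat \<Rightarrow> 'a) set" where
  "code_CSh alpha n h = {x. (\<forall>i\<ge>n. x i = 0) \<and>
      (\<forall>j\<in>{1..h}. (\<Sum>i<n. alpha i ^ (2 ^ (j - 1)) * x i) = 0)}"

definition hamming_dist :: "nat \<Rightarrow> (nat \<Rightarrow> 'a) \<Rightarrow> (nat \<Rightarrow> 'a) \<Rightarrow> nat" where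
  "hamming_dist n x y = card {i. i < n \<and> x i \<noteq> y i}"

text \<open>Minimum distance of a code (infinity for a code with fewer than two words).\<close>
definition min_distance :: "nat \<Rightarrow> (nat \<Rightarrow> 'a) set \<Rightarrow> enat" where
  "min_distance n C = Inf {enat (hamming_dist n x y) | x y. x \<in> C \<and> y \<in> C \<and> x \<noteq> y}"

definition lin_indep_F2 :: "(nat \<Rightarrow> 'a::field) \<Rightarrow> nat set \<Rightarrow> bool" where
  "lin_indep_F2 alpha T \<longleftrightarrow>
     (\<forall>c. (\<forall>i\<in>T. c i \<in> {0, 1}) \<and> (\<Sum>i\<in>T. c i * alpha i) = 0 \<longrightarrow> (\<forall>i\<in>T. c i = 0))"

definition t_wise_indep_F2 :: "nat \<Rightarrow> (nat \<Rightarrow> 'a::field) \<Rightarrow> nat \<Rightarrow> bool" where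
  "t_wise_indep_F2 t alpha n \<longleftrightarrow>
     (\<forall>T. T \<subseteq> {..<n} \<and> card T \<le> t \<longrightarrow> lin_indep_F2 alpha T)"

end

theory Submission imports Defs "HOL-Library.FuncSet" begin

lemma two0: "CHAR('a::field) = 2 \<Longrightarrow> (2::'a) = 0"
  by (metis of_nat_CHAR of_nat_numeral)

lemma addself: "CHAR('a::field) = 2 \<Longrightarrow> a + a = (0::'a)"
  using two0[where 'a='a] by (metis mult_2 mult_zero_left)

lemma minus_self: "CHAR('a::field) = 2 \<Longrightarrow> - a = (a::'a)"
  using addself[of a] by (metis add_eq_0_iff)

lemma frob2: "CHAR('a::field) = 2 \<Longrightarrow> (a + b)^2 = a^2 + (b::'a)^2"
  using two0[where 'a='a] by (simp add: power2_sum)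

lemma frob: "CHAR('a::field) = 2 \<Longrightarrow> (a + b)^(2^m) = a^(2^m) + (b::'a)^(2^m)"
proof (induction m)
  case 0 then show ?case by simp
next
  case (Suc m)
  have "(a + b)^(2^Suc m) = ((a+b)^(2^m))^2" by (simp add: power_mult[symmetric] mult.commute)
  also have "\<dots> = (a^(2^m))^2 + (b^(2^m))^2" using Suc frob2 by metis
  also have "\<dots> = a^(2^Suc m) + b^(2^Suc m)" by (simp add: power_mult[symmetric] mult.commute)
  finally show ?case .
qed

lemma frob_sum: assumes ch: "CHAR('a::field) = 2" and fin: "finite A" shows
   "(\<Sum>i\<in>A. f i)^(2^m) = (\<Sum>i\<in>A. (f i :: 'a)^(2^m))"
  using fin proof (induction A rule: finite_induct)
  case empty then show ?case by simp
next
  case (insert k F) then show ?case by (simp add: frob[OF ch])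
qed

lemma key:
  fixes x :: "nat \<Rightarrow> 'a::field"
  assumes ch: "CHAR('a) = 2" and fin: "finite T"
  shows "\<And>beta. lin_indep_F2 beta T \<Longrightarrow> (\<forall>j<card T. (\<Sum>i\<in>T. x i * beta i ^ (2^j)) = 0)
     \<Longrightarrow> \<forall>i\<in>T. x i = 0"
  using fin
proof (induction T rule: finite_induct)
  case empty then show ?case by simp
next
  case (insert k F beta)
  note ind = insert.prems(1)[unfolded lin_indep_F2_def]
  note eqs = insert.prems(2)
  have bk: "beta k \<noteq> 0"
  proof
    assume b0: "beta k = 0"
    have sm: "(\<Sum>i\<in>insert k F. (\<lambda>i. if i = k then 1 else 0) i * beta i) = 0"
      using insert.hyps b0 by (auto intro!: sum.neutral)
    then have "(\<lambda>i. if i = k then (1::'a) else 0) k = 0"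
    proof -
      have cv: "\<forall>i\<in>insert k F. (\<lambda>i. if i = k then (1::'a) else 0) i \<in> {0,1}" by simp
      show ?thesis by (rule ind[rule_format, OF conjI[OF cv sm]]) simp
    qed
    then show False by simp
  qed
  define gamma where "gamma i = beta i * (beta i + beta k)" for i
  have gind: "lin_indep_F2 gamma F"
    unfolding lin_indep_F2_def
  proof (intro allI impI)
    fix c assume h: "(\<forall>i\<in>F. c i \<in> {0, 1}) \<and> (\<Sum>i\<in>F. c i * gamma i) = 0"
    define s where "s = (\<Sum>i\<in>F. c i * beta i)"
    have c2: "c i * c i = c i" if "i \<in> F" for i using h that by auto
    have "s^2 = (\<Sum>i\<in>F. (c i * beta i)^2)"
      using frob_sum[OF ch insert.hyps(1), of "\<lambda>i. c i * beta i" 1] by (simp add: s_def)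
    also have "\<dots> = (\<Sum>i\<in>F. c i * beta i ^2)"
    proof (rule sum.cong[OF refl])
      fix i assume "i \<in> F"
      have "(c i * beta i)^2 = (c i * c i) * beta i ^ 2" by (simp add: power2_eq_square algebra_simps)
      also have "\<dots> = c i * beta i ^ 2" using c2[OF \<open>i \<in> F\<close>] by simp
      finally show "(c i * beta i)^2 = c i * beta i ^ 2" .
    qed

    finally have s2: "s^2 = (\<Sum>i\<in>F. c i * beta i ^2)" .
    have "(\<Sum>i\<in>F. c i * gamma i) = (\<Sum>i\<in>F. c i * beta i ^2) + beta k * s"
      by (simp add: gamma_def s_def sum_distrib_left sum.distrib[symmetric] algebra_simps power2_eq_square)
    then have "s * (s + beta k) = 0" using h s2 by (simp add: algebra_simps power2_eq_square)
    then consider "s = 0" | "s + beta k = 0" by auto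
    then show "\<forall>i\<in>F. c i = 0"
    proof cases
      case 1
      have sm0: "(\<Sum>i\<in>insert k F. (c(k:=0)) i * beta i) = s"
        using insert.hyps by (auto simp: s_def intro!: sum.cong)
      have "\<forall>i\<in>insert k F. (c(k:=0)) i = 0"
        by (rule ind[THEN spec, THEN mp]) (use sm0 1 h insert.hyps in auto)
      then show ?thesis using insert.hyps by (metis fun_upd_other insertI2)
    next
      case 2
      have sm1: "(\<Sum>i\<in>insert k F. (c(k:=1)) i * beta i) = beta k + s"
        using insert.hyps by (auto simp: s_def intro!: sum.cong)
      have "\<forall>i\<in>insert k F. (c(k:=1)) i = 0"
        by (rule ind[THEN spec, THEN mp]) (use sm1 2 h insert.hyps in \<open>auto simp: add.commute\<close>)
      then show ?thesis by simp
    qed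
  qed
  have geqs: "\<forall>j<card F. (\<Sum>i\<in>F. x i * gamma i ^ (2^j)) = 0"
  proof (intro allI impI)
    fix j assume j: "j < card F"
    have cI: "card (insert k F) = Suc (card F)" using insert.hyps by simp
    have E1: "x k * beta k ^ (2^Suc j) + (\<Sum>i\<in>F. x i * beta i ^ (2^Suc j)) = 0"
      using eqs[rule_format, of "Suc j"] j cI insert.hyps by simp
    have E0: "x k * beta k ^ (2^j) + (\<Sum>i\<in>F. x i * beta i ^ (2^j)) = 0"
      using eqs[rule_format, of j] j cI insert.hyps by simp
    have pw: "z ^ (2^Suc j) = z^(2^j) * z^(2^j)" for z :: 'a
    proof -
      have "(2::nat)^Suc j = 2^j + 2^j" by simp
      then show ?thesis by (simp only: power_add)
    qed
    have gp: "gamma i ^ (2^j) = beta i ^ (2^Suc j) + beta k ^ (2^j) * beta i ^ (2^j)" for i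
    proof -
      have "gamma i ^ (2^j) = beta i ^ (2^j) * (beta i ^ (2^j) + beta k ^ (2^j))"
        unfolding gamma_def power_mult_distrib frob[OF ch] ..
      also have "\<dots> = beta i ^ (2^j) * beta i ^ (2^j) + beta k ^ (2^j) * beta i ^ (2^j)"
        by (simp add: algebra_simps)
      finally show ?thesis by (simp only: pw)
    qed
    have "(\<Sum>i\<in>F. x i * gamma i ^ (2^j)) =
        (\<Sum>i\<in>F. x i * beta i ^ (2^Suc j)) + beta k ^ (2^j) * (\<Sum>i\<in>F. x i * beta i ^ (2^j))"
      by (simp add: gp sum.distrib sum_distrib_left algebra_simps)
    also have "\<dots> = (x k * beta k ^ (2^Suc j)) + (x k * beta k ^ (2^Suc j))"
      using E0 E1 pw[of "beta k"] minus_self[OF ch]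
    proof -
      have A: "(\<Sum>i\<in>F. x i * beta i ^ (2^Suc j)) = - (x k * beta k ^ (2^Suc j))"
        using E1 by (simp add: eq_neg_iff_add_eq_0 add.commute)
      have B: "(\<Sum>i\<in>F. x i * beta i ^ (2^j)) = - (x k * beta k ^ (2^j))"
        using E0 by (simp add: eq_neg_iff_add_eq_0 add.commute)
      show ?thesis unfolding A B minus_self[OF ch] pw[of "beta k"] by (simp add: algebra_simps)
    qed
    also have "\<dots> = 0" by (rule addself[OF ch])
    finally show "(\<Sum>i\<in>F. x i * gamma i ^ (2^j)) = 0" .
  qed
  have xF: "\<forall>i\<in>F. x i = 0" using insert.IH[OF gind geqs] .
  have "x k * beta k + (\<Sum>i\<in>F. x i * beta i) = 0"
    using eqs[rule_format, of 0] insert.hyps by simp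
  then have "x k * beta k = 0" using xF by simp
  then have "x k = 0" using bk by simp
  then show ?case using xF by simp
qed

lemma pow01: "c \<in> {0,1} \<Longrightarrow> (c::'a::field) ^ m = (if m = 0 then 1 else c)"
  by auto

theorem lemma9:
  fixes alpha :: "nat \<Rightarrow> 'a::{field, finite}"
    and h n :: nat
  assumes "CHAR('a) = 2"
    and "h > 0" and "n > 0"
    and "h < n"
  shows "min_distance n (code_CSh alpha n h) = enat (h + 1) \<longleftrightarrow> t_wise_indep_F2 h alpha n"
proof -
  note ch = assms(1)
  define C where "C = code_CSh alpha n h"
  define D where "D = {enat (hamming_dist n x y) | x y. x \<in> C \<and> y \<in> C \<and> x \<noteq> y}"
  have zC: "(\<lambda>_. 0) \<in> C" unfolding C_def code_CSh_def by simp
  have ex: "\<exists>d\<in>D. d \<le> enat (h+1)"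
  proof -
    define T where "T = {..h}"
    define A where "A = PiE T (\<lambda>_. UNIV :: 'a set)"
    define B where "B = PiE {..<h} (\<lambda>_. UNIV :: 'a set)"
    define f where "f z = restrict (\<lambda>j. \<Sum>i\<in>T. alpha i ^ (2^j) * z i) {..<h}" for z
    have cardA: "card A = card (UNIV::'a set) ^ (h+1)" unfolding A_def T_def by (simp add: card_PiE)
    have cardB: "card B = card (UNIV::'a set) ^ h" unfolding B_def by (simp add: card_PiE)
    have "card (UNIV::'a set) \<ge> 2"
    proof -
      have "{0, 1::'a} \<subseteq> UNIV" by simp
      then have "card {0, 1::'a} \<le> card (UNIV::'a set)" by (rule card_mono[OF finite_UNIV])
      then show ?thesis by simp
    qed
    then have "card B < card A" unfolding cardA cardB by simp
    moreover have "f ` A \<subseteq> B" unfolding f_def B_def by (auto split: if_splits)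
    ultimately have "\<not> inj_on f A"
      using card_inj_on_le[of f A B] unfolding B_def by (auto simp: finite_PiE)
    then obtain u v where uv: "u \<in> A" "v \<in> A" "u \<noteq> v" "f u = f v"
      unfolding inj_on_def by blast
    obtain i0 where i0: "i0 \<in> T" "u i0 \<noteq> v i0"
      using uv(1-3) unfolding A_def by (metis PiE_E ext)
    define w where "w i = (if i \<in> T then u i - v i else 0)" for i
    have TN: "T \<subseteq> {..<n}" unfolding T_def using assms(4) by auto
    have wC: "w \<in> C"
      unfolding C_def code_CSh_def
    proof (intro CollectI conjI allI impI ballI)
      fix i assume "n \<le> i" then show "w i = 0" using TN unfolding w_def by auto
    next
      fix j assume j: "j \<in> {1..h}"
      have "(\<Sum>i<n. alpha i ^ 2 ^ (j - 1) * w i) = (\<Sum>i\<in>T. alpha i ^ 2 ^ (j - 1) * w i)"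
        by (rule sum.mono_neutral_right) (use TN in \<open>auto simp: w_def\<close>)
      also have "\<dots> = (\<Sum>i\<in>T. alpha i ^ 2 ^ (j - 1) * u i) - (\<Sum>i\<in>T. alpha i ^ 2 ^ (j - 1) * v i)"
        by (simp add: w_def sum_subtractf right_diff_distrib)
      also have "\<dots> = f u (j - 1) - f v (j - 1)" using j unfolding f_def by auto
      also have "\<dots> = 0" using uv(4) by simp
      finally show "(\<Sum>i<n. alpha i ^ 2 ^ (j - 1) * w i) = 0" .
    qed
    have wne: "w \<noteq> (\<lambda>_. 0)" using i0 unfolding w_def by (metis right_minus_eq)
    have "hamming_dist n w (\<lambda>_. 0) = card {i. i < n \<and> w i \<noteq> 0}" unfolding hamming_dist_def by simp
    also have "\<dots> \<le> card T"
      by (rule card_mono) (auto simp: T_def w_def)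
    also have "\<dots> = h + 1" unfolding T_def by simp
    finally have "hamming_dist n w (\<lambda>_. 0) \<le> h + 1" .
    moreover have "enat (hamming_dist n w (\<lambda>_. 0)) \<in> D" unfolding D_def using wC zC wne by blast
    ultimately show ?thesis by (intro bexI[of _ "enat (hamming_dist n w (\<lambda>_. 0))"]) simp_all
  qed
  have md: "min_distance n C = Inf D" unfolding min_distance_def D_def by simp
  have equiv: "min_distance n C = enat (h + 1) \<longleftrightarrow> (\<forall>d\<in>D. enat (h+1) \<le> d)"
  proof
    assume "min_distance n C = enat (h + 1)"
    then show "\<forall>d\<in>D. enat (h+1) \<le> d" unfolding md by (metis Inf_lower)
  next
    assume a: "\<forall>d\<in>D. enat (h+1) \<le> d"
    have "enat (h+1) \<le> Inf D" using a by (simp add: Inf_greatest)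
    moreover have "Inf D \<le> enat (h+1)" using ex by (meson Inf_lower order_trans)
    ultimately show "min_distance n C = enat (h + 1)" unfolding md by simp
  qed
  have P1: "t_wise_indep_F2 h alpha n" if a: "\<forall>d\<in>D. enat (h+1) \<le> d"
    unfolding t_wise_indep_F2_def lin_indep_F2_def
  proof (intro allI impI ballI)
    fix T c i assume T: "T \<subseteq> {..<n} \<and> card T \<le> h"
      and c: "(\<forall>i\<in>T. c i \<in> {0, 1}) \<and> (\<Sum>i\<in>T. c i * alpha i) = (0::'a)" and i: "i \<in> T"
    have finT: "finite T" using T finite_subset by blast
    show "c i = 0"
    proof (rule ccontr)
      assume ci: "c i \<noteq> 0"
      define x where "x i = (if i \<in> T then c i else 0)" for i
      have xC: "x \<in> C"
        unfolding C_def code_CSh_def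
      proof (intro CollectI conjI allI impI ballI)
        fix i assume "n \<le> i" then show "x i = 0" using T unfolding x_def by auto
      next
        fix j assume j: "j \<in> {1..h}"
        have "(\<Sum>i<n. alpha i ^ 2 ^ (j - 1) * x i) = (\<Sum>i\<in>T. alpha i ^ 2 ^ (j - 1) * x i)"
          by (rule sum.mono_neutral_right) (use T in \<open>auto simp: x_def\<close>)
        also have "\<dots> = (\<Sum>i\<in>T. (c i * alpha i) ^ 2 ^ (j - 1))"
        proof (rule sum.cong[OF refl])
          fix i assume "i \<in> T"
          then have "c i ^ 2 ^ (j - 1) = c i" using c pow01[of "c i" "2^(j-1)"] by simp
          then show "alpha i ^ 2 ^ (j - 1) * x i = (c i * alpha i) ^ 2 ^ (j - 1)"
            using \<open>i \<in> T\<close> by (simp add: x_def power_mult_distrib)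
        qed
        also have "\<dots> = (\<Sum>i\<in>T. c i * alpha i) ^ 2 ^ (j - 1)"
          by (rule frob_sum[OF ch finT, symmetric])
        also have "\<dots> = 0" using c by simp
        finally show "(\<Sum>i<n. alpha i ^ 2 ^ (j - 1) * x i) = 0" .
      qed
      have xne: "x \<noteq> (\<lambda>_. 0)" using i ci unfolding x_def by metis
      have "hamming_dist n x (\<lambda>_. 0) = card {i. i < n \<and> x i \<noteq> 0}" unfolding hamming_dist_def by simp
      also have "\<dots> \<le> card T"
        by (rule card_mono[OF finT]) (auto simp: x_def split: if_splits)
      finally have "hamming_dist n x (\<lambda>_. 0) \<le> h" using T by simp
      moreover have "enat (hamming_dist n x (\<lambda>_. 0)) \<in> D" unfolding D_def using xC zC xne by blast
      ultimately show False using a by fastforce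
    qed
  qed
  have P2: "\<forall>d\<in>D. enat (h+1) \<le> d" if tw: "t_wise_indep_F2 h alpha n"
  proof
    fix d assume "d \<in> D"
    then obtain x y where xy: "d = enat (hamming_dist n x y)" "x \<in> C" "y \<in> C" "x \<noteq> y"
      unfolding D_def by blast
    define T where "T = {i. i < n \<and> x i \<noteq> y i}"
    have TN: "T \<subseteq> {..<n}" unfolding T_def by auto
    have finT: "finite T" using TN finite_subset by blast
    show "enat (h+1) \<le> d"
    proof (rule ccontr)
      assume "\<not> enat (h+1) \<le> d"
      then have cT: "card T \<le> h" using xy(1) unfolding T_def hamming_dist_def by simp
      have li: "lin_indep_F2 alpha T" using tw TN cT unfolding t_wise_indep_F2_def by blast
      have eqs: "\<forall>j<card T. (\<Sum>i\<in>T. (x i - y i) * alpha i ^ (2^j)) = 0"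
      proof (intro allI impI)
        fix j assume j: "j < card T"
        have jj: "Suc j \<in> {1..h}" using j cT by simp
        have ex0: "(\<Sum>i<n. alpha i ^ 2 ^ (Suc j - 1) * x i) = 0"
          using xy(2) jj unfolding C_def code_CSh_def by blast
        have ey0: "(\<Sum>i<n. alpha i ^ 2 ^ (Suc j - 1) * y i) = 0"
          using xy(3) jj unfolding C_def code_CSh_def by blast
        have "(\<Sum>i\<in>T. (x i - y i) * alpha i ^ (2^j)) = (\<Sum>i<n. (x i - y i) * alpha i ^ (2^j))"
          by (rule sum.mono_neutral_left) (auto simp: T_def)
        also have "\<dots> = (\<Sum>i<n. alpha i ^ 2 ^ (Suc j - 1) * x i) - (\<Sum>i<n. alpha i ^ 2 ^ (Suc j - 1) * y i)"
          by (simp add: sum_subtractf algebra_simps)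
        also have "\<dots> = 0" using ex0 ey0 by simp
        finally show "(\<Sum>i\<in>T. (x i - y i) * alpha i ^ (2^j)) = 0" .
      qed
      have "\<forall>i\<in>T. x i - y i = 0" by (rule key[OF ch finT li eqs])
      then have Te: "T = {}" unfolding T_def by auto
      obtain i where i: "x i \<noteq> y i" using xy(4) by blast
      have "i < n"
      proof (rule ccontr)
        assume "\<not> i < n"
        then show False using xy(2,3) i unfolding C_def code_CSh_def by auto
      qed
      then show False using Te i unfolding T_def by auto
    qed
  qed
  show ?thesis using equiv P1 P2 unfolding C_def by blast
qed

end
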